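(* Let $G$ be a linear reductive algebraic group over $\mathbb{C}$ with maximal torus $T\subseteq B$, root system $\Phi$ with positive roots $\Phi^+$ and simple roots $\Delta$, and Weyl group $W$. Let $S\in\mathfrak{h}=\mathrm{Lie}(T)$ be a non-regular semisimple element such that $M=Z_G(S)$ is a standard Levi subgroup. Let $v\in{}^MW$, let $L=L_v$ and write $v=x_vw_v$ with $w_v$ the longest element of $W_L$ and $x_v\in W^L$. Then $\tau=x_vz$ is an element of ${}^MW$ for every $z\in W_L$.
   Context: For $w\in W$, $N(w)=\{\gamma\in\Phi^+ : w(\gamma)\in-\Phi^+\}$ and $\ell(w)$ is the length. For a subset $\Delta_L\subseteq\Delta$, $L$ denotes the standard Levi subgroup, $\Phi_L$ its root subsystem with $\Phi_L^+=\Phi_L\cap\Phi^+$, $W_L=\langle s_\alpha:\alpha\in\Delta_L\rangle$, ${}^LW=\{v\in W: N(v^{-1})\subseteq\Phi^+\setminus\Phi_L^+\}$, $W^L=\{v\in W: N(v)\subseteq\Phi^+\setminus\Phi_L^+\}$. The Levi $M=Z_G(S)$ has $\Phi_M=\{\gamma:\gamma(S)=0\}$ and $\Delta_M=\{\alpha\in\Delta:\alpha(S)=0\}$. For $v\in W$, $R(v)=N(v)\cap\Delta$ and $L_v$ is the standard Levi subgroup with $\Delta_{L_v}=R(v)$; $v$ factors uniquely as $v=x_vw_v$ with $x_v\in W^{L_v}$, $w_v$ the longest element of $W_{L_v}$, $\ell(v)=\ell(x_v)+\ell(w_v)$. *)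

theory Defs
  imports "HOL-Analysis.Analysis"
begin

text \<open>Abstract (reduced, crystallographic) root system \<Phi> in a real Euclidean space,
  with simple system \<Delta>; the Weyl group acts by orthogonal reflections.\<close>

definition refl :: "'a::real_inner \<Rightarrow> 'a \<Rightarrow> 'a" where
  "refl \<alpha> = (\<lambda>x. x - (2 * (x \<bullet> \<alpha>) / (\<alpha> \<bullet> \<alpha>)) *\<^sub>R \<alpha>)"

definition wprod :: "'a::real_inner list \<Rightarrow> 'a \<Rightarrow> 'a" where
  "wprod \<alpha>s = foldr (\<lambda>\<alpha> g. refl \<alpha> \<circ> g) \<alpha>s id"

definition weyl_gen :: "'a::real_inner set \<Rightarrow> ('a \<Rightarrow> 'a) set" where
  "weyl_gen A = {wprod \<alpha>s | \<alpha>s. set \<alpha>s \<subseteq> A}"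

definition root_system :: "'a::euclidean_space set \<Rightarrow> bool" where
  "root_system \<Phi> \<longleftrightarrow> finite \<Phi> \<and> 0 \<notin> \<Phi> \<and>
     (\<forall>\<alpha>\<in>\<Phi>. refl \<alpha> ` \<Phi> = \<Phi>) \<and>
     (\<forall>\<alpha>\<in>\<Phi>. \<forall>\<beta>\<in>\<Phi>. 2 * (\<beta> \<bullet> \<alpha>) / (\<alpha> \<bullet> \<alpha>) \<in> \<int>) \<and>
     (\<forall>\<alpha>\<in>\<Phi>. \<forall>c. c *\<^sub>R \<alpha> \<in> \<Phi> \<longrightarrow> c = 1 \<or> c = -1)"

definition pos_roots :: "'a::euclidean_space set \<Rightarrow> 'a set \<Rightarrow> 'a set" where
  "pos_roots \<Phi> \<Delta> = {\<gamma>\<in>\<Phi>. \<exists>c. (\<forall>\<alpha>\<in>\<Delta>. c \<alpha> \<in> \<int> \<and> c \<alpha> \<ge> 0) \<and> \<gamma> = (\<Sum>\<alpha>\<in>\<Delta>. c \<alpha> *\<^sub>R \<alpha>)}"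

definition simple_system :: "'a::euclidean_space set \<Rightarrow> 'a set \<Rightarrow> bool" where
  "simple_system \<Phi> \<Delta> \<longleftrightarrow> \<Delta> \<subseteq> \<Phi> \<and> independent \<Delta> \<and>
     (\<forall>\<gamma>\<in>\<Phi>. \<gamma> \<in> pos_roots \<Phi> \<Delta> \<or> - \<gamma> \<in> pos_roots \<Phi> \<Delta>)"

abbreviation weyl :: "'a::euclidean_space set \<Rightarrow> ('a \<Rightarrow> 'a) set" where
  "weyl \<Phi> \<equiv> weyl_gen \<Phi>"

definition inversions :: "'a::euclidean_space set \<Rightarrow> 'a set \<Rightarrow> ('a \<Rightarrow> 'a) \<Rightarrow> 'a set" where
  "inversions \<Phi> \<Delta> w = {\<gamma>\<in>pos_roots \<Phi> \<Delta>. w \<gamma> \<in> uminus ` pos_roots \<Phi> \<Delta>}"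

definition wlength :: "'a::euclidean_space set \<Rightarrow> ('a \<Rightarrow> 'a) \<Rightarrow> nat" where
  "wlength \<Delta> w = (LEAST n. \<exists>\<alpha>s. set \<alpha>s \<subseteq> \<Delta> \<and> length \<alpha>s = n \<and> wprod \<alpha>s = w)"

definition levi_roots :: "'a::euclidean_space set \<Rightarrow> 'a set \<Rightarrow> 'a set" where
  "levi_roots \<Phi> D = \<Phi> \<inter> span D"

definition levi_pos :: "'a::euclidean_space set \<Rightarrow> 'a set \<Rightarrow> 'a set \<Rightarrow> 'a set" where
  "levi_pos \<Phi> \<Delta> D = levi_roots \<Phi> D \<inter> pos_roots \<Phi> \<Delta>"

text \<open>^L W and W^L.\<close>
definition left_min :: "'a::euclidean_space set \<Rightarrow> 'a set \<Rightarrow> 'a set \<Rightarrow> ('a \<Rightarrow> 'a) set" where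
  "left_min \<Phi> \<Delta> D = {v \<in> weyl \<Phi>. inversions \<Phi> \<Delta> (inv v) \<subseteq> pos_roots \<Phi> \<Delta> - levi_pos \<Phi> \<Delta> D}"

definition right_min :: "'a::euclidean_space set \<Rightarrow> 'a set \<Rightarrow> 'a set \<Rightarrow> ('a \<Rightarrow> 'a) set" where
  "right_min \<Phi> \<Delta> D = {v \<in> weyl \<Phi>. inversions \<Phi> \<Delta> v \<subseteq> pos_roots \<Phi> \<Delta> - levi_pos \<Phi> \<Delta> D}"

definition Rset :: "'a::euclidean_space set \<Rightarrow> 'a set \<Rightarrow> ('a \<Rightarrow> 'a) \<Rightarrow> 'a set" where
  "Rset \<Phi> \<Delta> v = inversions \<Phi> \<Delta> v \<inter> \<Delta>"

definition longest :: "'a::euclidean_space set \<Rightarrow> 'a set \<Rightarrow> ('a \<Rightarrow> 'a) \<Rightarrow> bool" where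
  "longest \<Delta> D w \<longleftrightarrow> w \<in> weyl_gen D \<and> (\<forall>u\<in>weyl_gen D. wlength \<Delta> u \<le> wlength \<Delta> w)"

end

theory Submission
  imports Defs
begin

lemma refl_linear: "linear (refl a)"
  unfolding refl_def by (auto intro!: linearI simp: algebra_simps inner_add_left add_divide_distrib scaleR_add_left)

lemma refl_refl: "a \<noteq> 0 \<Longrightarrow> refl a (refl a y) = y"
  unfolding refl_def by (simp add: inner_diff_left algebra_simps)

lemma wprod_Nil[simp]: "wprod [] = id" by (simp add: wprod_def)
lemma wprod_Cons[simp]: "wprod (a # as) = refl a \<circ> wprod as" by (simp add: wprod_def)
lemma wprod_append: "wprod (as @ bs) = wprod as \<circ> wprod bs"
  by (induction as) auto

lemma wprod_linear: "linear (wprod as)"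
proof (induction as)
  case Nil show ?case by (simp add: linear_iff)
next
  case (Cons a as) show ?case unfolding wprod_Cons by (rule linear_compose[OF Cons refl_linear])
qed

lemma wprod_rev_inv:
  assumes "0 \<notin> set as"
  shows "wprod (rev as) \<circ> wprod as = id" "wprod as \<circ> wprod (rev as) = id"
  using assms
proof (induction as)
  case (Cons a as)
  { case 1 then show ?case using Cons by (auto simp: wprod_append fun_eq_iff refl_refl) }
  { case 2 then show ?case using Cons 
      by (simp add: wprod_append fun_eq_iff refl_refl) }
qed auto

lemma wprod_inv: "0 \<notin> set as \<Longrightarrow> inv (wprod as) = wprod (rev as)"
  using wprod_rev_inv inv_unique_comp by blast


lemma neg_img_iff: "(y::'b::ab_group_add) \<in> uminus ` A \<longleftrightarrow> - y \<in> A"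
  by (metis image_iff minus_minus)

definition cf :: "'a::euclidean_space set \<Rightarrow> 'a \<Rightarrow> 'a \<Rightarrow> real" where
  "cf \<Delta> \<beta> = (SOME f. linear f \<and> (\<forall>\<alpha>\<in>\<Delta>. f \<alpha> = (if \<alpha> = \<beta> then 1 else 0)))"

context
  fixes \<Phi> \<Delta> :: "'a::euclidean_space set"
  assumes rs: "root_system \<Phi>" and ss: "simple_system \<Phi> \<Delta>"
begin

lemma fin\<Phi>: "finite \<Phi>" and z\<Phi>: "0 \<notin> \<Phi>" and refl\<Phi>: "\<alpha> \<in> \<Phi> \<Longrightarrow> refl \<alpha> ` \<Phi> = \<Phi>"
  using rs unfolding root_system_def by blast+

lemma \<Delta>\<Phi>: "\<Delta> \<subseteq> \<Phi>" and indep: "independent \<Delta>"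
  and pm: "\<gamma> \<in> \<Phi> \<Longrightarrow> \<gamma> \<in> pos_roots \<Phi> \<Delta> \<or> - \<gamma> \<in> pos_roots \<Phi> \<Delta>"
  using ss by (auto simp: simple_system_def)

lemma fin\<Delta>: "finite \<Delta>" using \<Delta>\<Phi> fin\<Phi> finite_subset by blast

lemma cf_ex: "linear (cf \<Delta> \<beta>) \<and> (\<forall>\<alpha>\<in>\<Delta>. cf \<Delta> \<beta> \<alpha> = (if \<alpha> = \<beta> then 1 else 0))"
proof -
  have "\<exists>f::'a\<Rightarrow>real. linear f \<and> (\<forall>\<alpha>\<in>\<Delta>. f \<alpha> = (if \<alpha> = \<beta> then 1 else 0))"
    using linear_independent_extend[OF indep, of "\<lambda>\<alpha>. if \<alpha> = \<beta> then (1::real) else 0"] by simp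
  then show ?thesis unfolding cf_def by (rule someI_ex)
qed

lemma cf_lin: "linear (cf \<Delta> \<beta>)" and cf_D: "\<alpha> \<in> \<Delta> \<Longrightarrow> cf \<Delta> \<beta> \<alpha> = (if \<alpha> = \<beta> then 1 else 0)"
  using cf_ex by auto

lemma cf_sum: "\<beta> \<in> \<Delta> \<Longrightarrow> cf \<Delta> \<beta> (\<Sum>\<alpha>\<in>\<Delta>. c \<alpha> *\<^sub>R \<alpha>) = c \<beta>"
proof -
  assume b: "\<beta> \<in> \<Delta>"
  have "cf \<Delta> \<beta> (\<Sum>\<alpha>\<in>\<Delta>. c \<alpha> *\<^sub>R \<alpha>) = (\<Sum>\<alpha>\<in>\<Delta>. c \<alpha> * cf \<Delta> \<beta> \<alpha>)"
    using cf_lin by (simp add: linear_sum linear_scale)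
  also have "\<dots> = (\<Sum>\<alpha>\<in>\<Delta>. if \<alpha> = \<beta> then c \<alpha> else 0)"
    by (rule sum.cong) (auto simp: cf_D)
  also have "\<dots> = c \<beta>" using b fin\<Delta> by simp
  finally show ?thesis .
qed

lemma cf_neg: "cf \<Delta> \<beta> (- y) = - cf \<Delta> \<beta> y" using cf_lin linear_neg by blast

lemma pos_cf: assumes "\<gamma> \<in> pos_roots \<Phi> \<Delta>"
  shows "\<forall>\<beta>\<in>\<Delta>. cf \<Delta> \<beta> \<gamma> \<ge> 0" "\<gamma> = (\<Sum>\<alpha>\<in>\<Delta>. cf \<Delta> \<alpha> \<gamma> *\<^sub>R \<alpha>)"
proof -
  obtain c where c: "\<forall>\<alpha>\<in>\<Delta>. c \<alpha> \<in> \<int> \<and> c \<alpha> \<ge> 0" "\<gamma> = (\<Sum>\<alpha>\<in>\<Delta>. c \<alpha> *\<^sub>R \<alpha>)"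
    using assms by (auto simp: pos_roots_def)
  then have e: "\<forall>\<beta>\<in>\<Delta>. cf \<Delta> \<beta> \<gamma> = c \<beta>" using cf_sum by auto
  show "\<forall>\<beta>\<in>\<Delta>. cf \<Delta> \<beta> \<gamma> \<ge> 0" using e c by auto
  have "(\<Sum>\<alpha>\<in>\<Delta>. cf \<Delta> \<alpha> \<gamma> *\<^sub>R \<alpha>) = (\<Sum>\<alpha>\<in>\<Delta>. c \<alpha> *\<^sub>R \<alpha>)"
    by (rule sum.cong) (simp_all add: e)
  then show "\<gamma> = (\<Sum>\<alpha>\<in>\<Delta>. cf \<Delta> \<alpha> \<gamma> *\<^sub>R \<alpha>)" using c(2) by simp
qed

lemma repr: assumes "\<gamma> \<in> \<Phi>" shows "\<gamma> = (\<Sum>\<alpha>\<in>\<Delta>. cf \<Delta> \<alpha> \<gamma> *\<^sub>R \<alpha>)"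
proof (cases "\<gamma> \<in> pos_roots \<Phi> \<Delta>")
  case True then show ?thesis using pos_cf by blast
next
  case False
  then have "- \<gamma> \<in> pos_roots \<Phi> \<Delta>" using pm assms by blast
  then have "- \<gamma> = (\<Sum>\<alpha>\<in>\<Delta>. cf \<Delta> \<alpha> (- \<gamma>) *\<^sub>R \<alpha>)" using pos_cf by blast
  then have "- \<gamma> = - (\<Sum>\<alpha>\<in>\<Delta>. cf \<Delta> \<alpha> \<gamma> *\<^sub>R \<alpha>)" by (simp add: cf_neg sum_negf)
  then show ?thesis by simp
qed

lemma all_zero: assumes "\<gamma> \<in> \<Phi>" "\<forall>\<beta>\<in>\<Delta>. cf \<Delta> \<beta> \<gamma> = 0" shows False
proof -
  have "\<gamma> = 0" using repr[OF assms(1)] assms(2) by simp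
  then show False using assms z\<Phi> by simp
qed

lemma root_nonneg: assumes "\<gamma> \<in> \<Phi>" "\<forall>\<beta>\<in>\<Delta>. cf \<Delta> \<beta> \<gamma> \<ge> 0" shows "\<gamma> \<in> pos_roots \<Phi> \<Delta>"
proof (rule ccontr)
  assume "\<gamma> \<notin> pos_roots \<Phi> \<Delta>"
  then have "- \<gamma> \<in> pos_roots \<Phi> \<Delta>" using pm assms by blast
  then have "\<forall>\<beta>\<in>\<Delta>. cf \<Delta> \<beta> \<gamma> \<le> 0" using pos_cf(1) cf_neg by fastforce
  then show False using all_zero[OF assms(1)] assms(2) by force
qed

lemma root_nonpos: assumes "\<gamma> \<in> \<Phi>" "\<forall>\<beta>\<in>\<Delta>. cf \<Delta> \<beta> \<gamma> \<le> 0" shows "- \<gamma> \<in> pos_roots \<Phi> \<Delta>"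
proof (rule ccontr)
  assume "- \<gamma> \<notin> pos_roots \<Phi> \<Delta>"
  then have "\<gamma> \<in> pos_roots \<Phi> \<Delta>" using pm assms by blast
  then have "\<forall>\<beta>\<in>\<Delta>. cf \<Delta> \<beta> \<gamma> \<ge> 0" using pos_cf(1) by fastforce
  then show False using all_zero[OF assms(1)] assms(2) by force
qed

lemma pos_sub: "pos_roots \<Phi> \<Delta> \<subseteq> \<Phi>" by (auto simp: pos_roots_def)

lemma not_both: assumes "\<gamma> \<in> pos_roots \<Phi> \<Delta>" "- \<gamma> \<in> pos_roots \<Phi> \<Delta>" shows False
proof -
  have "\<forall>\<beta>\<in>\<Delta>. cf \<Delta> \<beta> \<gamma> \<ge> 0" "\<forall>\<beta>\<in>\<Delta>. cf \<Delta> \<beta> (- \<gamma>) \<ge> 0" using pos_cf(1) assms by blast+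
  then have "\<forall>\<beta>\<in>\<Delta>. cf \<Delta> \<beta> \<gamma> = 0" by (force simp: cf_neg)
  then show False using all_zero assms pos_sub by blast
qed

lemma span_cf: assumes "D \<subseteq> \<Delta>" "\<gamma> \<in> \<Phi>"
  shows "\<gamma> \<in> span D \<longleftrightarrow> (\<forall>\<beta>\<in>\<Delta> - D. cf \<Delta> \<beta> \<gamma> = 0)"
proof
  assume "\<gamma> \<in> span D"
  then show "\<forall>\<beta>\<in>\<Delta> - D. cf \<Delta> \<beta> \<gamma> = 0"
  proof (intro ballI)
    fix \<beta> assume b: "\<beta> \<in> \<Delta> - D"
    have "\<forall>d\<in>D. cf \<Delta> \<beta> d = 0" using b assms(1) cf_D by auto
    then show "cf \<Delta> \<beta> \<gamma> = 0" using \<open>\<gamma> \<in> span D\<close> cf_lin linear_eq_0_on_span by blast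
  qed
next
  assume h: "\<forall>\<beta>\<in>\<Delta> - D. cf \<Delta> \<beta> \<gamma> = 0"
  have "(\<Sum>\<alpha>\<in>\<Delta>. cf \<Delta> \<alpha> \<gamma> *\<^sub>R \<alpha>) \<in> span D"
  proof (rule span_sum)
    fix \<alpha> assume "\<alpha> \<in> \<Delta>"
    then show "cf \<Delta> \<alpha> \<gamma> *\<^sub>R \<alpha> \<in> span D" using h
      by (cases "\<alpha> \<in> D") (auto intro: span_scale span_base span_zero)
  qed
  then show "\<gamma> \<in> span D" using repr[OF assms(2)] by simp
qed


lemma refl_cf: assumes "d \<in> \<Delta>" "\<beta> \<in> \<Delta>" "\<beta> \<noteq> d" shows "cf \<Delta> \<beta> (refl d y) = cf \<Delta> \<beta> y"
proof -
  have "cf \<Delta> \<beta> (refl d y) = cf \<Delta> \<beta> y - (2 * (y \<bullet> d) / (d \<bullet> d)) * cf \<Delta> \<beta> d"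
    unfolding refl_def using cf_lin by (simp add: linear_diff linear_scale)
  also have "cf \<Delta> \<beta> d = 0" using cf_D assms by auto
  finally show ?thesis by simp
qed

lemma wprod_Phi: "set as \<subseteq> \<Phi> \<Longrightarrow> \<gamma> \<in> \<Phi> \<Longrightarrow> wprod as \<gamma> \<in> \<Phi>"
proof (induction as)
  case (Cons a as)
  then have "wprod as \<gamma> \<in> \<Phi>" "a \<in> \<Phi>" by auto
  then show ?case using refl\<Phi> by auto
qed simp

lemma wprod_span: "set as \<subseteq> D \<Longrightarrow> \<gamma> \<in> span D \<Longrightarrow> wprod as \<gamma> \<in> span D"
proof (induction as)
  case (Cons a as)
  then have "wprod as \<gamma> \<in> span D" "a \<in> D" by auto
  then have "a \<in> span D" "wprod as \<gamma> \<in> span D" by (auto intro: span_base)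
  then show ?case by (simp add: refl_def span_diff span_scale)
qed simp

lemma WL_out: assumes D: "D \<subseteq> \<Delta>"
  shows "set as \<subseteq> D \<Longrightarrow> \<gamma> \<in> pos_roots \<Phi> \<Delta> \<Longrightarrow> \<gamma> \<notin> span D \<Longrightarrow>
    wprod as \<gamma> \<in> pos_roots \<Phi> \<Delta> \<and> wprod as \<gamma> \<notin> span D"
proof (induction as)
  case (Cons d as)
  define \<eta> where "\<eta> = wprod as \<gamma>"
  have h: "\<eta> \<in> pos_roots \<Phi> \<Delta>" "\<eta> \<notin> span D" "d \<in> D" using Cons by (auto simp: \<eta>_def)
  have e\<Phi>: "\<eta> \<in> \<Phi>" using h pos_sub by blast
  obtain \<beta> where b: "\<beta> \<in> \<Delta> - D" "cf \<Delta> \<beta> \<eta> \<noteq> 0" using span_cf[OF D e\<Phi>] h by blast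
  have "cf \<Delta> \<beta> \<eta> \<ge> 0" using pos_cf(1)[OF h(1)] b by blast
  with b have gt: "cf \<Delta> \<beta> \<eta> > 0" by simp
  have dD: "d \<in> \<Delta>" "d \<in> \<Phi>" using h D \<Delta>\<Phi> by auto
  have r\<Phi>: "refl d \<eta> \<in> \<Phi>" using refl\<Phi>[OF dD(2)] e\<Phi> by blast
  have cfe: "cf \<Delta> \<beta> (refl d \<eta>) = cf \<Delta> \<beta> \<eta>" using refl_cf[OF dD(1)] b h by auto
  have "refl d \<eta> \<notin> span D" using span_cf[OF D r\<Phi>] b cfe gt by auto
  moreover have "refl d \<eta> \<in> pos_roots \<Phi> \<Delta>"
  proof (rule ccontr)
    assume "refl d \<eta> \<notin> pos_roots \<Phi> \<Delta>"
    then have "- refl d \<eta> \<in> pos_roots \<Phi> \<Delta>" using pm r\<Phi> by blast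
    then have "cf \<Delta> \<beta> (- refl d \<eta>) \<ge> 0" using pos_cf(1) b by blast
    then show False using cfe gt cf_neg by simp
  qed
  ultimately show ?case by (simp add: \<eta>_def)
qed simp

end

theorem mainTheorem2:
  fixes \<Phi> \<Delta> :: "'a::euclidean_space set"
    and S :: "'a \<Rightarrow> complex"
    and v x w :: "'a \<Rightarrow> 'a"
  assumes "root_system \<Phi>"
    and "simple_system \<Phi> \<Delta>"
    and "linear S"
    and "\<exists>\<gamma>\<in>\<Phi>. S \<gamma> = 0"
    and "{\<gamma>\<in>\<Phi>. S \<gamma> = 0} = levi_roots \<Phi> {\<alpha>\<in>\<Delta>. S \<alpha> = 0}"
    and "v \<in> left_min \<Phi> \<Delta> {\<alpha>\<in>\<Delta>. S \<alpha> = 0}"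
    and "longest \<Delta> (Rset \<Phi> \<Delta> v) w"
    and "x \<in> right_min \<Phi> \<Delta> (Rset \<Phi> \<Delta> v)"
    and "v = x \<circ> w"
  shows "\<forall>z\<in>weyl_gen (Rset \<Phi> \<Delta> v). x \<circ> z \<in> left_min \<Phi> \<Delta> {\<alpha>\<in>\<Delta>. S \<alpha> = 0}"
proof
  fix z assume zW: "z \<in> weyl_gen (Rset \<Phi> \<Delta> v)"
  note rs = assms(1) and ss = assms(2)
  define D where "D = Rset \<Phi> \<Delta> v"
  define M where "M = {\<alpha>\<in>\<Delta>. S \<alpha> = 0}"
  define P where "P = pos_roots \<Phi> \<Delta>"
  have D\<Delta>: "D \<subseteq> \<Delta>" by (auto simp: D_def Rset_def)
  have D\<Phi>: "\<Delta> \<subseteq> \<Phi>" using \<Delta>\<Phi>[OF rs ss] .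
  have z0: "0 \<notin> \<Phi>" using z\<Phi>[OF rs ss] .
  have P\<Phi>: "P \<subseteq> \<Phi>" unfolding P_def using pos_sub[OF rs ss] .
  obtain zs where zs: "set zs \<subseteq> D" "z = wprod zs" using zW by (auto simp: weyl_gen_def D_def)
  obtain xs where xs: "set xs \<subseteq> \<Phi>" "x = wprod xs" using assms(8) by (auto simp: right_min_def weyl_gen_def)
  have "w \<in> weyl_gen D" using assms(7) by (simp add: longest_def D_def)
  then obtain ws where ws: "set ws \<subseteq> D" "w = wprod ws" by (auto simp: weyl_gen_def)
  have zs\<Phi>: "set zs \<subseteq> \<Phi>" "set (rev zs) \<subseteq> \<Phi>" using zs D\<Delta> D\<Phi> by auto
  have ws\<Phi>: "set ws \<subseteq> \<Phi>" "set (rev ws) \<subseteq> \<Phi>" using ws D\<Delta> D\<Phi> by auto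
  have xs\<Phi>: "set (rev xs) \<subseteq> \<Phi>" using xs by auto
  have n0: "0 \<notin> set xs" "0 \<notin> set zs" "0 \<notin> set ws" using xs zs\<Phi> ws\<Phi> z0 by auto
  have xinv: "inv x = wprod (rev xs)" using wprod_inv n0 xs by blast
  have zinv: "inv z = wprod (rev zs)" using wprod_inv n0 zs by blast
  have winv: "inv w = wprod (rev ws)" using wprod_inv n0 ws by blast
  have "inv v = wprod (rev (xs @ ws))" using assms(9) xs ws wprod_inv[of "xs @ ws"] n0
    by (simp add: wprod_append)
  then have invv: "inv v = inv w \<circ> inv x" by (simp add: wprod_append xinv winv)
  have "inv (x \<circ> z) = wprod (rev (xs @ zs))" using xs zs wprod_inv[of "xs @ zs"] n0
    by (simp add: wprod_append)
  then have invxz: "inv (x \<circ> z) = inv z \<circ> inv x" by (simp add: wprod_append xinv zinv)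
  have xzW: "x \<circ> z \<in> weyl \<Phi>" unfolding weyl_gen_def
    using xs zs\<Phi> zs(2) by (auto intro!: exI[of _ "xs @ zs"] simp: wprod_append)
  have xx: "x (inv x \<gamma>) = \<gamma>" for \<gamma>
    using wprod_rev_inv(2)[OF n0(1)] xs xinv by (metis comp_apply id_apply)
  have ww: "w (inv w \<gamma>) = \<gamma>" for \<gamma>
    using wprod_rev_inv(2)[OF n0(3)] ws winv by (metis comp_apply id_apply)
  have linw: "linear w" "linear (inv w)" "linear x"
    using ws winv xs wprod_linear by auto
  have w\<Phi>: "\<gamma> \<in> \<Phi> \<Longrightarrow> w \<gamma> \<in> \<Phi>" "\<gamma> \<in> \<Phi> \<Longrightarrow> inv w \<gamma> \<in> \<Phi>"
     "\<gamma> \<in> \<Phi> \<Longrightarrow> inv x \<gamma> \<in> \<Phi>" for \<gamma>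
    using wprod_Phi[OF rs ss] ws ws\<Phi> winv xinv xs\<Phi> by auto
  have wspan: "\<gamma> \<in> span D \<Longrightarrow> w \<gamma> \<in> span D" "\<gamma> \<in> span D \<Longrightarrow> inv w \<gamma> \<in> span D" for \<gamma>
    using wprod_span[OF rs ss, of ws D] wprod_span[OF rs ss, of "rev ws" D] ws winv by auto
  have xmin: "inversions \<Phi> \<Delta> x \<subseteq> P - levi_pos \<Phi> \<Delta> D" using assms(8) by (simp add: right_min_def D_def P_def)
  have vmin: "inversions \<Phi> \<Delta> (inv v) \<subseteq> P - levi_pos \<Phi> \<Delta> M" using assms(6) by (simp add: left_min_def M_def P_def)
  have wneg: "- w d \<in> P" if d: "d \<in> D" for d
  proof -
    have d1: "d \<in> P" "- v d \<in> P" "d \<in> \<Delta>" using d by (auto simp: D_def Rset_def inversions_def P_def neg_img_iff)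
    have wd: "w d \<in> \<Phi>" "w d \<in> span D" using w\<Phi>(1) wspan(1)[OF span_base[OF d]] d1 D\<Phi> by auto
    show ?thesis
    proof (rule ccontr)
      assume "- w d \<notin> P"
      then have "w d \<in> P" using pm[OF rs ss] wd unfolding P_def by blast
      moreover have "x (w d) \<in> uminus ` P" using d1 assms(9) by (simp add: neg_img_iff)
      ultimately have "w d \<in> inversions \<Phi> \<Delta> x" by (simp add: inversions_def P_def)
      then have "w d \<notin> levi_pos \<Phi> \<Delta> D" using xmin by blast
      then show False using wd \<open>w d \<in> P\<close> by (simp add: levi_pos_def levi_roots_def P_def)
    qed
  qed
  have wL: "- w \<eta> \<in> P" if e: "\<eta> \<in> P" "\<eta> \<in> span D" for \<eta>
  proof -
    have e\<Phi>: "\<eta> \<in> \<Phi>" using e P\<Phi> by auto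
    have "w \<eta> = w (\<Sum>\<alpha>\<in>\<Delta>. cf \<Delta> \<alpha> \<eta> *\<^sub>R \<alpha>)" using repr[OF rs ss e\<Phi>] by simp
    also have "\<dots> = (\<Sum>\<alpha>\<in>\<Delta>. cf \<Delta> \<alpha> \<eta> *\<^sub>R w \<alpha>)" using linw(1) by (simp add: linear_sum linear_scale)
    finally have we: "w \<eta> = (\<Sum>\<alpha>\<in>\<Delta>. cf \<Delta> \<alpha> \<eta> *\<^sub>R w \<alpha>)" .
    have "\<forall>\<beta>\<in>\<Delta>. cf \<Delta> \<beta> (w \<eta>) \<le> 0"
    proof
      fix \<beta> assume b: "\<beta> \<in> \<Delta>"
      have "cf \<Delta> \<beta> (w \<eta>) = (\<Sum>\<alpha>\<in>\<Delta>. cf \<Delta> \<alpha> \<eta> * cf \<Delta> \<beta> (w \<alpha>))"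
        unfolding we using cf_lin[OF rs ss] by (simp add: linear_sum linear_scale)
      also have "\<dots> \<le> 0"
      proof (rule sum_nonpos)
        fix \<alpha> assume a: "\<alpha> \<in> \<Delta>"
        show "cf \<Delta> \<alpha> \<eta> * cf \<Delta> \<beta> (w \<alpha>) \<le> 0"
        proof (cases "\<alpha> \<in> D")
          case True
          have "cf \<Delta> \<alpha> \<eta> \<ge> 0" using pos_cf(1)[OF rs ss] e a unfolding P_def by blast
          moreover have "cf \<Delta> \<beta> (- w \<alpha>) \<ge> 0" using pos_cf(1)[OF rs ss] wneg[OF True] b unfolding P_def by blast
          ultimately show ?thesis by (simp add: cf_neg[OF rs ss] mult_nonneg_nonpos)
        next
          case False
          then have "cf \<Delta> \<alpha> \<eta> = 0" using span_cf[OF rs ss D\<Delta> e\<Phi>] e a by blast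
          then show ?thesis by simp
        qed
      qed
      finally show "cf \<Delta> \<beta> (w \<eta>) \<le> 0" .
    qed
    then show ?thesis using root_nonpos[OF rs ss] w\<Phi>(1)[OF e\<Phi>] unfolding P_def by blast
  qed
  have invwL: "- inv w \<eta> \<in> P" if e: "\<eta> \<in> P" "\<eta> \<in> span D" for \<eta>
  proof (rule ccontr)
    assume a: "- inv w \<eta> \<notin> P"
    have m: "inv w \<eta> \<in> \<Phi>" "inv w \<eta> \<in> span D" using w\<Phi> wspan e P\<Phi> by auto
    then have "inv w \<eta> \<in> P" using a pm[OF rs ss] unfolding P_def by blast
    then have "- \<eta> \<in> P" using wL m ww by metis
    then show False using not_both[OF rs ss] e unfolding P_def by blast
  qed
  show "x \<circ> z \<in> left_min \<Phi> \<Delta> {\<alpha>\<in>\<Delta>. S \<alpha> = 0}"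
    unfolding left_min_def M_def[symmetric]
  proof (intro CollectI conjI subsetI xzW)
    fix \<gamma> assume "\<gamma> \<in> inversions \<Phi> \<Delta> (inv (x \<circ> z))"
    then have g: "\<gamma> \<in> P" "- inv z (inv x \<gamma>) \<in> P"
      by (auto simp: inversions_def P_def invxz neg_img_iff)
    show "\<gamma> \<in> pos_roots \<Phi> \<Delta> - levi_pos \<Phi> \<Delta> M"
    proof
      show "\<gamma> \<in> pos_roots \<Phi> \<Delta>" using g P_def by simp
      show "\<gamma> \<notin> levi_pos \<Phi> \<Delta> M"
      proof
        assume gl: "\<gamma> \<in> levi_pos \<Phi> \<Delta> M"
        then have "\<gamma> \<notin> inversions \<Phi> \<Delta> (inv v)" using vmin by blast
        then have nv: "- inv w (inv x \<gamma>) \<notin> P" using g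
          by (auto simp: inversions_def P_def invv neg_img_iff)
        define \<delta> where "\<delta> = inv x \<gamma>"
        have d\<Phi>: "\<delta> \<in> \<Phi>" using w\<Phi> g P\<Phi> \<delta>_def by auto
        show False
        proof (cases "\<delta> \<in> span D")
          case True
          show False
          proof (cases "\<delta> \<in> P")
            case True
            then show False using invwL \<open>\<delta> \<in> span D\<close> nv \<delta>_def by blast
          next
            case False
            then have nd: "- \<delta> \<in> P" using pm[OF rs ss] d\<Phi> unfolding P_def by blast
            have "x (- \<delta>) = - \<gamma>" using linw(3) xx \<delta>_def by (simp add: linear_neg)
            then have "- \<delta> \<in> inversions \<Phi> \<Delta> x" using nd g by (simp add: inversions_def P_def neg_img_iff)
            moreover have "- \<delta> \<in> levi_pos \<Phi> \<Delta> D" using nd \<open>\<delta> \<in> span D\<close> P\<Phi>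
              by (auto simp: levi_pos_def levi_roots_def P_def span_neg)
            ultimately show False using xmin by blast
          qed
        next
          case False
          show False
          proof (cases "\<delta> \<in> P")
            case True
            have "inv z \<delta> \<in> P" using WL_out[OF rs ss D\<Delta>, of "rev zs" \<delta>] zs zinv True False
              unfolding P_def by auto
            then show False using g not_both[OF rs ss] \<delta>_def unfolding P_def by blast
          next
            case nP: False
            then have nd: "- \<delta> \<in> P" using pm[OF rs ss] d\<Phi> unfolding P_def by blast
            have "- \<delta> \<notin> span D" using False span_neg by fastforce
            then have "inv w (- \<delta>) \<in> P" using WL_out[OF rs ss D\<Delta>, of "rev ws" "- \<delta>"] ws winv nd
              unfolding P_def by auto
            then have "- inv w \<delta> \<in> P" using linw(2) by (simp add: linear_neg)
            then show False using nv \<delta>_def by blast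
          qed
        qed
      qed
    qed
  qed
qed

end
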